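(* Let $K=\{p\in\mathbb{R}^3:0\le p_3\le\theta(p_1,p_2)\}$ and, for $p^{pr}\in K$, let $N_K(p^{pr})=\{z\in\mathbb{R}^3:\langle z,q-p^{pr}\rangle\le0\ \forall q\in K\}$ be the normal cone. Then: (i) if $p^{pr}\in\{(p_1,p_2,p_3):0<p_3<\theta(p_1,p_2)\}$, then $N_K(p^{pr})=\{0\}$; (ii) if $p^{pr}\in(0,\infty)\times(0,\infty)\times\{0\}$, then $N_K(p^{pr})=\{0\}\times\{0\}\times(-\infty,0]$; (iii) if $p^{pr}=(p^{pr}_1,0,0)$ with $p^{pr}_1>0$, then $N_K(p^{pr})=\{0\}\times(-\infty,0]\times(-\infty,0]\ \cup\ \{(0,q_2,q_3)\in\{0\}\times(-\infty,0]\times(0,\infty):(0,-q_2/q_3)\in\partial^+\theta(p^{pr}_1,0)\}$; moreover $(0,q)\in\partial^+\theta(p^{pr}_1,0)$ is equivalent to $q\ge\lim_{z\searrow0}\partial_2\theta(p^{pr}_1,z)$, and $\partial^+\theta(p^{pr}_1,0)$ is empty if this limit equals $+\infty$; the analogous representation holds for $p^{pr}=(0,p^{pr}_2,0)$ with $p^{pr}_2>0$; (iv) if $p^{pr}=(0,0,0)$, then $N_K(p^{pr})=(-\infty,0]^3\cup\{(q_1,q_2,q_3)\in(-\infty,0]\times(-\infty,0]\times(0,\infty):(q_1/q_3,q_2/q_3)\in-\partial^+\theta(0)\}$; (v) if $p^{pr}=(p^{pr}_1,p^{pr}_2,\theta(p^{pr}_1,p^{pr}_2))$ with $(p^{pr}_1,p^{pr}_2)\in(0,\infty)^2$,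 then $N_K(p^{pr})=\{\lambda(-\partial_1\theta(p^{pr}_1,p^{pr}_2),-\partial_2\theta(p^{pr}_1,p^{pr}_2),1):\lambda>0\}$.
   Context: $\theta:[0,\infty)^2\to[0,\infty)$ is continuous, concave, 1-homogeneous, symmetric, $C^\infty$ on $(0,\infty)^2$, with $\theta(0,s)=\theta(s,0)=0$, $\theta(s,s)=s$, $\theta(s,t)>0$ for $s,t>0$, and nondecreasing in each argument; it is regarded as a concave function $\mathbb{R}^2\to\mathbb{R}\cup\{-\infty\}$ by setting $\theta(s,t)=-\infty$ if $\min\{s,t\}<0$. The super-differential of $\theta$ at $x\in\mathbb{R}^2$ is $\partial^+\theta(x)=-\partial(-\theta)(x)$, where $\partial(-\theta)(x)$ is the convex subdifferential of $-\theta$ at $x$; equivalently $\partial^+\theta(x)=\{r\in\mathbb{R}^2:\theta(y)\le\theta(x)+\langle r,y-x\rangle\ \forall y\in\mathbb{R}^2\}$. *)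

theory Defs
  imports "HOL-Analysis.Analysis"
begin

definition quadrant :: "(real \<times> real) set" where
  "quadrant = {0..} \<times> {0..}"

definition open_quadrant :: "(real \<times> real) set" where
  "open_quadrant = {0<..} \<times> {0<..}"

text \<open>C^k regularity of a function of two real variables on a set S (intended: S open),
  via continuity and existence of C^(k-1) partial derivatives (Frechet differentiability).\<close>
fun Ck_on :: "nat \<Rightarrow> (real \<times> real \<Rightarrow> real) \<Rightarrow> (real \<times> real) set \<Rightarrow> bool" where
  "Ck_on 0 f S = continuous_on S f"
| "Ck_on (Suc n) f S =
     (\<exists>g1 g2. (\<forall>x\<in>S. (f has_derivative (\<lambda>h. g1 x * fst h + g2 x * snd h)) (at x))
              \<and> Ck_on n g1 S \<and> Ck_on n g2 S)"

definition smooth_on2 :: "(real \<times> real \<Rightarrow> real) \<Rightarrow> (real \<times> real) set \<Rightarrow> bool" where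
  "smooth_on2 f S = (\<forall>n. Ck_on n f S)"

text \<open>theta regarded as a concave function R^2 -> R \<union> {-\<infinity>}.\<close>
definition theta_ext :: "(real \<Rightarrow> real \<Rightarrow> real) \<Rightarrow> real \<times> real \<Rightarrow> ereal" where
  "theta_ext th x = (if fst x \<ge> 0 \<and> snd x \<ge> 0 then ereal (th (fst x) (snd x)) else -\<infinity>)"

definition superdiff :: "(real \<times> real \<Rightarrow> ereal) \<Rightarrow> real \<times> real \<Rightarrow> (real \<times> real) set" where
  "superdiff g x = {r. \<forall>y. g y \<le> g x + ereal (r \<bullet> (y - x))}"

definition normal_cone :: "'a::real_inner set \<Rightarrow> 'a \<Rightarrow> 'a set" where
  "normal_cone K p = {z. \<forall>q\<in>K. z \<bullet> (q - p) \<le> 0}"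

definition Kset :: "(real \<Rightarrow> real \<Rightarrow> real) \<Rightarrow> (real \<times> real \<times> real) set" where
  "Kset th = {(p1, p2, p3). p1 \<ge> 0 \<and> p2 \<ge> 0 \<and> 0 \<le> p3 \<and> p3 \<le> th p1 p2}"

end

theory Submission
  imports Defs
begin



lemma concave_grad_ineq:
  fixes F :: "'a::real_normed_vector \<Rightarrow> real"
  assumes conc: "concave_on S F" and x: "x \<in> S" and y: "y \<in> S"
    and der: "(F has_derivative D) (at x)"
  shows "F y \<le> F x + D (y - x)"
proof -
  define psi where "psi = (\<lambda>l::real. F (x + l *\<^sub>R (y - x)))"
  have lin: "linear D" using der has_derivative_linear by blast
  have d1: "((\<lambda>l::real. x + l *\<^sub>R (y - x)) has_derivative (\<lambda>h. h *\<^sub>R (y - x))) (at 0)"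
    by (auto intro!: derivative_eq_intros)
  have d2: "(F has_derivative D) (at (x + 0 *\<^sub>R (y - x)))" using der by simp
  have "(psi has_derivative (\<lambda>h. D (h *\<^sub>R (y - x)))) (at 0)"
    unfolding psi_def using has_derivative_compose[OF d1 d2] by (simp add: o_def)
  moreover have "(\<lambda>h. D (h *\<^sub>R (y - x))) = (\<lambda>h. D (y - x) * h)"
    using lin by (auto simp: linear_scale)
  ultimately have "(psi has_field_derivative D (y - x)) (at 0)"
    by (simp add: has_field_derivative_def)
  hence lim: "((\<lambda>l. (psi l - psi 0) / (l - 0)) \<longlongrightarrow> D (y - x)) (at_right 0)"
    unfolding has_field_derivative_iff by (blast intro: tendsto_mono at_le)
  have ev0: "eventually (\<lambda>l. l \<in> {0<..<1}) (at_right (0::real))"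
    by (rule eventually_at_right_real) simp
  have ev: "eventually (\<lambda>l. F y - F x \<le> (psi l - psi 0) / (l - 0)) (at_right 0)"
    using ev0
  proof eventually_elim
    case (elim l)
    hence l: "0 < l" "l < 1" by auto
    have "x + l *\<^sub>R (y - x) = (1 - l) *\<^sub>R x + l *\<^sub>R y" by (simp add: algebra_simps)
    hence "psi l \<ge> (1 - l) * F x + l * F y"
      unfolding psi_def using concave_onD[OF conc, of l x y] l x y by auto
    hence "psi l - psi 0 \<ge> l * (F y - F x)" by (simp add: psi_def algebra_simps)
    thus ?case using l by (simp add: field_simps)
  qed
  have "F y - F x \<le> D (y - x)"
    using tendsto_lowerbound[OF lim ev] by simp
  thus ?thesis by simp
qed



lemma deriv_lim:
  fixes phi d :: "real \<Rightarrow> real"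
  assumes tang: "\<And>z y. z > 0 \<Longrightarrow> y \<ge> 0 \<Longrightarrow> phi y \<le> phi z + d z * (y - z)"
    and c0: "(phi \<longlongrightarrow> 0) (at_right 0)" and z0: "phi 0 = 0"
  shows "((\<lambda>z. ereal (d z)) \<longlongrightarrow> (SUP z\<in>{0<..}. ereal (phi z / z))) (at_right 0)"
proof -
  define M where "M = (SUP z\<in>{0<..}. ereal (phi z / z))"
  have dle: "d z \<le> phi z / z" if "z > 0" for z
  proof -
    have "phi 0 \<le> phi z + d z * (0 - z)" using tang[OF that, of 0] by simp
    hence "d z * z \<le> phi z" using z0 by simp
    thus ?thesis using that by (simp add: field_simps)
  qed
  have "((\<lambda>z. ereal (d z)) \<longlongrightarrow> M) (at_right 0)"
  proof (rule order_tendstoI)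
    fix a assume "a > M"
    have ev0: "eventually (\<lambda>l. l \<in> {0<..<1}) (at_right (0::real))"
      by (rule eventually_at_right_real) simp
    thus "eventually (\<lambda>z. ereal (d z) < a) (at_right 0)"
    proof eventually_elim
      case (elim z)
      hence z: "z > 0" by simp
      have "ereal (d z) \<le> ereal (phi z / z)" using dle[OF z] by simp
      also have "\<dots> \<le> M" unfolding M_def using z by (intro SUP_upper) auto
      finally show ?case using \<open>a > M\<close> by simp
    qed
  next
    fix a assume "a < M"
    then obtain w where w: "w > 0" "a < ereal (phi w / w)"
      unfolding M_def less_SUP_iff by auto
    show "eventually (\<lambda>z. a < ereal (d z)) (at_right 0)"
    proof (cases a)
      case MInf
      thus ?thesis by simp
    next
      case PInf
      thus ?thesis using w by simp
    next
      case (real a')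
      hence aw: "a' < phi w / w" using w by simp
      have "((\<lambda>z. (phi w - phi z) / (w - z)) \<longlongrightarrow> (phi w - 0) / (w - 0)) (at_right 0)"
        using w by (intro tendsto_intros c0) auto
      hence "eventually (\<lambda>z. a' < (phi w - phi z) / (w - z)) (at_right 0)"
        using aw by (intro order_tendstoD) auto
      moreover have "eventually (\<lambda>l. l \<in> {0<..<w}) (at_right (0::real))"
        by (rule eventually_at_right_real) (use w in simp)
      ultimately show ?thesis
      proof eventually_elim
        case (elim z)
        hence z: "0 < z" "z < w" by auto
        have "phi w \<le> phi z + d z * (w - z)" using tang[of z w] z by simp
        hence "(phi w - phi z) / (w - z) \<le> d z" using z by (simp add: field_simps)
        thus ?case using elim real by simp
      qed
    qed
  qed
  thus ?thesis unfolding M_def .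
qed

lemma superdiff_iff:
  assumes "a \<ge> 0" "b \<ge> 0"
  shows "(r1, r2) \<in> superdiff (theta_ext th) (a, b) \<longleftrightarrow>
    (\<forall>s t. s \<ge> 0 \<longrightarrow> t \<ge> 0 \<longrightarrow> th s t \<le> th a b + r1 * (s - a) + r2 * (t - b))"
proof
  assume h: "(r1, r2) \<in> superdiff (theta_ext th) (a, b)"
  show "\<forall>s t. s \<ge> 0 \<longrightarrow> t \<ge> 0 \<longrightarrow> th s t \<le> th a b + r1 * (s - a) + r2 * (t - b)"
  proof (intro allI impI)
    fix s t :: real assume st: "s \<ge> 0" "t \<ge> 0"
    have "theta_ext th (s, t) \<le> theta_ext th (a, b) + ereal ((r1, r2) \<bullet> ((s, t) - (a, b)))"
      using h unfolding superdiff_def by blast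
    thus "th s t \<le> th a b + r1 * (s - a) + r2 * (t - b)"
      using st assms by (simp add: theta_ext_def algebra_simps)
  qed
next
  assume h: "\<forall>s t. s \<ge> 0 \<longrightarrow> t \<ge> 0 \<longrightarrow> th s t \<le> th a b + r1 * (s - a) + r2 * (t - b)"
  show "(r1, r2) \<in> superdiff (theta_ext th) (a, b)"
    unfolding superdiff_def
  proof (intro CollectI allI)
    fix y :: "real \<times> real"
    obtain s t where y: "y = (s, t)" by fastforce
    show "theta_ext th y \<le> theta_ext th (a, b) + ereal ((r1, r2) \<bullet> (y - (a, b)))"
    proof (cases "s \<ge> 0 \<and> t \<ge> 0")
      case True
      hence "th s t \<le> th a b + r1 * (s - a) + r2 * (t - b)" using h by blast
      thus ?thesis using True y assms by (simp add: theta_ext_def algebra_simps)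
    next
      case False
      thus ?thesis using y by (auto simp: theta_ext_def)
    qed
  qed
qed

lemma cone_iff:
  "(z1, z2, z3) \<in> normal_cone (Kset th) (p1, p2, p3) \<longleftrightarrow>
    (\<forall>s t u. 0 \<le> s \<longrightarrow> 0 \<le> t \<longrightarrow> 0 \<le> u \<longrightarrow> u \<le> th s t \<longrightarrow>
       z1 * (s - p1) + z2 * (t - p2) + z3 * (u - p3) \<le> 0)"
  unfolding normal_cone_def Kset_def by (auto simp: algebra_simps)

lemma partials:
  fixes th :: "real \<Rightarrow> real \<Rightarrow> real"
  assumes "((\<lambda>(s, t). th s t) has_derivative (\<lambda>h. a * fst h + b * snd h)) (at (x, y))"
  shows "((\<lambda>s. th s y) has_real_derivative a) (at x)"
    and "((\<lambda>t. th x t) has_real_derivative b) (at y)"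
proof -
  have d1: "((\<lambda>s. (s, y)) has_derivative (\<lambda>h. (h, 0))) (at x)"
    by (auto intro!: derivative_eq_intros)
  show "((\<lambda>s. th s y) has_real_derivative a) (at x)"
    using has_derivative_compose[OF d1 assms] by (simp add: o_def has_field_derivative_def)
  have d2: "((\<lambda>t. (x, t)) has_derivative (\<lambda>h. (0, h))) (at y)"
    by (auto intro!: derivative_eq_intros)
  show "((\<lambda>t. th x t) has_real_derivative b) (at y)"
    using has_derivative_compose[OF d2 assms] by (simp add: o_def has_field_derivative_def)
qed



lemma zero_from:
  fixes x a b :: real
  assumes "x * a \<le> 0" "x * b \<le> 0" "a > 0" "b < 0"
  shows "x = 0"
proof (cases x "0::real" rule: linorder_cases)
  case less
  hence "x * b > 0" using assms(4) by (simp add: mult_neg_neg)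
  thus ?thesis using assms(2) by simp
next
  case greater
  hence "x * a > 0" using assms(3) by simp
  thus ?thesis using assms(1) by simp
qed simp


lemma part1:
  fixes th :: "real \<Rightarrow> real \<Rightarrow> real"
  assumes homog: "\<And>c s t. c > 0 \<Longrightarrow> s \<ge> 0 \<Longrightarrow> t \<ge> 0 \<Longrightarrow> th (c * s) (c * t) = c * th s t"
    and zero1: "\<And>s. s \<ge> 0 \<Longrightarrow> th 0 s = 0"
    and zero2: "\<And>s. s \<ge> 0 \<Longrightarrow> th s 0 = 0"
    and mono1: "\<And>s s' t. 0 \<le> s \<Longrightarrow> s \<le> s' \<Longrightarrow> t \<ge> 0 \<Longrightarrow> th s t \<le> th s' t"
    and mono2: "\<And>s t t'. s \<ge> 0 \<Longrightarrow> 0 \<le> t \<Longrightarrow> t \<le> t' \<Longrightarrow> th s t \<le> th s t'"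
    and p: "p1 \<ge> 0" "p2 \<ge> 0" "0 < p3" "p3 < th p1 p2"
  shows "normal_cone (Kset th) (p1, p2, p3) = {0}"
proof -
  define T where "T = th p1 p2"
  have p1: "p1 > 0" using p zero1[of p2] by (cases "p1 = 0") auto
  have p2: "p2 > 0" using p zero2[of p1] by (cases "p2 = 0") auto
  have T: "T > p3" using p T_def by simp
  define l where "l = (1 + p3 / T) / 2"
  have l: "0 < l" "l < 1" "l * T \<ge> p3" using T p by (auto simp: l_def field_simps)
  have thl: "th (l * p1) (l * p2) = l * T" using homog[of l p1 p2] l p1 p2 T_def by simp
  have lp1: "l * p1 \<le> p1" using mult_right_mono[of l 1 p1] l p1 by simp
  have lp2: "l * p2 \<le> p2" using mult_right_mono[of l 1 p2] l p2 by simp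
  have lp0: "0 \<le> l * p1" "0 \<le> l * p2" using l p1 p2 by simp_all
  have "th (l * p1) (l * p2) \<le> th (l * p1) p2" by (rule mono2) (use lp0 lp2 in auto)
  hence a1: "th (l * p1) p2 \<ge> p3" using thl l by linarith
  have "th (l * p1) (l * p2) \<le> th p1 (l * p2)" by (rule mono1) (use lp0 lp1 in auto)
  hence a2: "th p1 (l * p2) \<ge> p3" using thl l by linarith
  have a3: "th (p1 + p1) p2 \<ge> p3" using mono1[of p1 "p1 + p1" p2] p1 p2 T T_def by simp
  have a4: "th p1 (p2 + p2) \<ge> p3" using mono2[of p1 p2 "p2 + p2"] p1 p2 T T_def by simp
  show ?thesis
  proof (intro set_eqI iffI)
    fix z assume z: "z \<in> normal_cone (Kset th) (p1, p2, p3)"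
    obtain z1 z2 z3 where zz: "z = (z1, z2, z3)" by (cases z) auto
    have P: "\<And>s t u. 0 \<le> s \<Longrightarrow> 0 \<le> t \<Longrightarrow> 0 \<le> u \<Longrightarrow> u \<le> th s t \<Longrightarrow>
       z1 * (s - p1) + z2 * (t - p2) + z3 * (u - p3) \<le> 0"
      using z unfolding zz cone_iff by blast
    have "z1 * p1 \<le> 0" using P[of "p1 + p1" p2 p3] a3 p1 p2 p by simp
    moreover have "z1 * (l * p1 - p1) \<le> 0" using P[of "l * p1" p2 p3] a1 p1 p2 p l by simp
    moreover have "l * p1 - p1 < 0" using lp1 l p1 by simp
    ultimately have "z1 = 0" using p1 by (intro zero_from)
    have "z2 * p2 \<le> 0" using P[of p1 "p2 + p2" p3] a4 p1 p2 p by simp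
    moreover have "z2 * (l * p2 - p2) \<le> 0" using P[of p1 "l * p2" p3] a2 p1 p2 p l by simp
    moreover have "l * p2 - p2 < 0" using lp2 l p2 by simp
    ultimately have "z2 = 0" using p2 by (intro zero_from)
    have "z3 * (0 - p3) \<le> 0" using P[of p1 p2 0] p1 p2 p by simp
    moreover have "z3 * (T - p3) \<le> 0" using P[of p1 p2 T] p1 p2 p T T_def by simp
    ultimately have "z3 = 0" using p T by (intro zero_from[of z3 "T - p3" "0 - p3"]) auto
    show "z \<in> {0}" using zz \<open>z1 = 0\<close> \<open>z2 = 0\<close> \<open>z3 = 0\<close> by (simp add: zero_prod_def)
  next
    fix z :: "real \<times> real \<times> real" assume "z \<in> {0}"
    thus "z \<in> normal_cone (Kset th) (p1, p2, p3)" by (simp add: normal_cone_def)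
  qed
qed

lemma part2:
  fixes th :: "real \<Rightarrow> real \<Rightarrow> real"
  assumes nonneg: "\<And>s t. s \<ge> 0 \<Longrightarrow> t \<ge> 0 \<Longrightarrow> th s t \<ge> 0"
    and pos: "\<And>s t. s > 0 \<Longrightarrow> t > 0 \<Longrightarrow> th s t > 0"
    and p: "p1 > 0" "p2 > 0"
  shows "normal_cone (Kset th) (p1, p2, 0) = {(0, 0, q3) | q3. q3 \<le> 0}"
proof (intro set_eqI iffI)
  fix z assume z: "z \<in> normal_cone (Kset th) (p1, p2, 0)"
  obtain z1 z2 z3 where zz: "z = (z1, z2, z3)" by (cases z) auto
  have P: "\<And>s t u. 0 \<le> s \<Longrightarrow> 0 \<le> t \<Longrightarrow> 0 \<le> u \<Longrightarrow> u \<le> th s t \<Longrightarrow>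
     z1 * (s - p1) + z2 * (t - p2) + z3 * (u - 0) \<le> 0"
    using z unfolding zz cone_iff by blast
  have "z1 * p1 \<le> 0" using P[of "p1 + p1" p2 0] nonneg p by simp
  moreover have "z1 * (0 - p1) \<le> 0" using P[of 0 p2 0] nonneg p by simp
  ultimately have "z1 = 0" using p by (intro zero_from[of z1 p1 "0 - p1"]) auto
  have "z2 * p2 \<le> 0" using P[of p1 "p2 + p2" 0] nonneg p by simp
  moreover have "z2 * (0 - p2) \<le> 0" using P[of p1 0 0] nonneg p by simp
  ultimately have "z2 = 0" using p by (intro zero_from[of z2 p2 "0 - p2"]) auto
  have "z3 * th p1 p2 \<le> 0" using P[of p1 p2 "th p1 p2"] pos[OF p] p by simp
  hence "z3 \<le> 0" using pos[OF p] by (simp add: mult_le_0_iff)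
  show "z \<in> {(0, 0, q3) | q3. q3 \<le> 0}" using zz \<open>z1 = 0\<close> \<open>z2 = 0\<close> \<open>z3 \<le> 0\<close> by simp
next
  fix z :: "real \<times> real \<times> real" assume "z \<in> {(0, 0, q3) | q3::real. q3 \<le> 0}"
  then obtain q3 where zz: "z = (0, 0, q3)" "q3 \<le> 0" by blast
  show "z \<in> normal_cone (Kset th) (p1, p2, 0)"
    unfolding zz cone_iff using zz(2) by (simp add: mult_nonneg_nonpos mult_le_0_iff)
qed



lemma part3_cone:
  fixes th :: "real \<Rightarrow> real \<Rightarrow> real"
  assumes nonneg: "\<And>s t. s \<ge> 0 \<Longrightarrow> t \<ge> 0 \<Longrightarrow> th s t \<ge> 0"
    and zero2: "\<And>s. s \<ge> 0 \<Longrightarrow> th s 0 = 0"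
    and p: "p1 > 0"
  shows "normal_cone (Kset th) (p1, 0, 0) =
          {(0, q2, q3) | q2 q3. q2 \<le> 0 \<and> q3 \<le> 0}
          \<union> {(0, q2, q3) | q2 q3. q2 \<le> 0 \<and> q3 > 0 \<and>
                 (0, - q2 / q3) \<in> superdiff (theta_ext th) (p1, 0)}"
proof (intro set_eqI iffI)
  fix z assume z: "z \<in> normal_cone (Kset th) (p1, 0, 0)"
  obtain z1 z2 z3 where zz: "z = (z1, z2, z3)" by (cases z) auto
  have P: "\<And>s t u. 0 \<le> s \<Longrightarrow> 0 \<le> t \<Longrightarrow> 0 \<le> u \<Longrightarrow> u \<le> th s t \<Longrightarrow>
     z1 * (s - p1) + z2 * (t - 0) + z3 * (u - 0) \<le> 0"
    using z unfolding zz cone_iff by blast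
  have "z1 * p1 \<le> 0" using P[of "p1 + p1" 0 0] nonneg p by simp
  moreover have "z1 * (0 - p1) \<le> 0" using P[of 0 0 0] nonneg p by simp
  ultimately have z1: "z1 = 0" using p by (auto simp: mult_le_0_iff zero_le_mult_iff)
  have z2: "z2 \<le> 0" using P[of p1 1 0] nonneg p by simp
  show "z \<in> {(0, q2, q3) | q2 q3. q2 \<le> 0 \<and> q3 \<le> 0}
          \<union> {(0, q2, q3) | q2 q3. q2 \<le> 0 \<and> q3 > 0 \<and>
                 (0, - q2 / q3) \<in> superdiff (theta_ext th) (p1, 0)}"
  proof (cases "z3 \<le> 0")
    case True
    thus ?thesis using zz z1 z2 by simp
  next
    case False
    hence z3: "z3 > 0" by simp
    have "\<forall>s t. s \<ge> 0 \<longrightarrow> t \<ge> 0 \<longrightarrow> th s t \<le> th p1 0 + 0 * (s - p1) + (- z2 / z3) * (t - 0)"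
    proof (intro allI impI)
      fix s t :: real assume st: "s \<ge> 0" "t \<ge> 0"
      have "z2 * t + z3 * th s t \<le> 0" using P[of s t "th s t"] st nonneg z1 by simp
      hence "z3 * th s t \<le> - z2 * t" by simp
      hence "th s t \<le> (- z2 * t) / z3" using z3 by (simp add: field_simps)
      thus "th s t \<le> th p1 0 + 0 * (s - p1) + (- z2 / z3) * (t - 0)"
        using zero2 p by simp
    qed
    hence "(0, - z2 / z3) \<in> superdiff (theta_ext th) (p1, 0)"
      using superdiff_iff[of p1 0 0 "- z2 / z3" th] p by simp
    thus ?thesis using zz z1 z2 z3 by simp
  qed
next
  fix z :: "real \<times> real \<times> real"
  assume z: "z \<in> {(0, q2, q3) | q2 q3. q2 \<le> 0 \<and> q3 \<le> 0}
          \<union> {(0, q2, q3) | q2 q3. q2 \<le> 0 \<and> q3 > 0 \<and>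
                 (0, - q2 / q3) \<in> superdiff (theta_ext th) (p1, 0)}"
  then obtain q2 q3 where zz: "z = (0, q2, q3)" and q2: "q2 \<le> 0" by blast
  show "z \<in> normal_cone (Kset th) (p1, 0, 0)"
    unfolding zz cone_iff
  proof (intro allI impI)
    fix s t u :: real assume st: "0 \<le> s" "0 \<le> t" "0 \<le> u" "u \<le> th s t"
    have a: "q2 * t \<le> 0" using q2 st by (simp add: mult_nonpos_nonneg)
    show "0 * (s - p1) + q2 * (t - 0) + q3 * (u - 0) \<le> 0"
    proof (cases "q3 \<le> 0")
      case True
      hence "q3 * u \<le> 0" using st by (simp add: mult_nonpos_nonneg)
      thus ?thesis using a by simp
    next
      case False
      hence q3: "q3 > 0" by simp
      hence "(0, - q2 / q3) \<in> superdiff (theta_ext th) (p1, 0)" using z zz by auto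
      hence "th s t \<le> th p1 0 + 0 * (s - p1) + (- q2 / q3) * (t - 0)"
        using superdiff_iff[of p1 0 0 "- q2 / q3" th] p st by simp
      hence "th s t \<le> (- q2 * t) / q3" using zero2 p by simp
      hence "q3 * th s t \<le> - q2 * t" using q3 by (simp add: field_simps)
      moreover have "q3 * u \<le> q3 * th s t" using q3 st by simp
      ultimately show ?thesis by simp
    qed
  qed
qed

lemma part3_sd:
  fixes th :: "real \<Rightarrow> real \<Rightarrow> real"
  assumes nonneg: "\<And>s t. s \<ge> 0 \<Longrightarrow> t \<ge> 0 \<Longrightarrow> th s t \<ge> 0"
    and homog: "\<And>c s t. c > 0 \<Longrightarrow> s \<ge> 0 \<Longrightarrow> t \<ge> 0 \<Longrightarrow> th (c * s) (c * t) = c * th s t"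
    and zero1: "\<And>s. s \<ge> 0 \<Longrightarrow> th 0 s = 0"
    and zero2: "\<And>s. s \<ge> 0 \<Longrightarrow> th s 0 = 0"
    and p: "p1 > 0"
  shows "(0, q) \<in> superdiff (theta_ext th) (p1, 0) \<longleftrightarrow> (\<forall>z>0. th p1 z / z \<le> q)"
proof -
  have "(0, q) \<in> superdiff (theta_ext th) (p1, 0) \<longleftrightarrow> (\<forall>s t. s \<ge> 0 \<longrightarrow> t \<ge> 0 \<longrightarrow> th s t \<le> q * t)"
    using superdiff_iff[of p1 0 0 q th] p zero2 by simp
  also have "\<dots> \<longleftrightarrow> (\<forall>z>0. th p1 z / z \<le> q)"
  proof
    assume h: "\<forall>s t. s \<ge> 0 \<longrightarrow> t \<ge> 0 \<longrightarrow> th s t \<le> q * t"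
    show "\<forall>z>0. th p1 z / z \<le> q"
    proof (intro allI impI)
      fix z :: real assume "z > 0"
      thus "th p1 z / z \<le> q" using h p by (simp add: pos_divide_le_eq)
    qed
  next
    assume h: "\<forall>z>0. th p1 z / z \<le> q"
    have q0: "q \<ge> 0" using h[rule_format, of 1] nonneg[of p1 1] p by simp
    show "\<forall>s t. s \<ge> 0 \<longrightarrow> t \<ge> 0 \<longrightarrow> th s t \<le> q * t"
    proof (intro allI impI)
      fix s t :: real assume st: "s \<ge> 0" "t \<ge> 0"
      show "th s t \<le> q * t"
      proof (cases "s = 0 \<or> t = 0")
        case True
        thus ?thesis using zero1 zero2 st q0 by auto
      next
        case False
        hence st': "s > 0" "t > 0" using st by auto
        define z where "z = p1 * t / s"
        have z: "z > 0" using st' p by (simp add: z_def)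
        have "th s t = th ((s / p1) * p1) ((s / p1) * z)" using st' p by (simp add: z_def)
        also have "\<dots> = (s / p1) * th p1 z" using homog[of "s / p1" p1 z] st' p z by simp
        also have "\<dots> \<le> (s / p1) * (q * z)"
          using h[rule_format, OF z] z st' p by (intro mult_left_mono) (auto simp: pos_divide_le_eq)
        also have "\<dots> = q * t" using st' p by (simp add: z_def field_simps)
        finally show ?thesis .
      qed
    qed
  qed
  finally show ?thesis .
qed

lemma part3_lim:
  fixes th :: "real \<Rightarrow> real \<Rightarrow> real"
  assumes cont: "continuous_on quadrant (\<lambda>(s, t). th s t)"
    and conc: "concave_on quadrant (\<lambda>(s, t). th s t)"
    and nonneg: "\<And>s t. s \<ge> 0 \<Longrightarrow> t \<ge> 0 \<Longrightarrow> th s t \<ge> 0"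
    and homog: "\<And>c s t. c > 0 \<Longrightarrow> s \<ge> 0 \<Longrightarrow> t \<ge> 0 \<Longrightarrow> th (c * s) (c * t) = c * th s t"
    and zero1: "\<And>s. s \<ge> 0 \<Longrightarrow> th 0 s = 0"
    and zero2: "\<And>s. s \<ge> 0 \<Longrightarrow> th s 0 = 0"
    and p: "p1 > 0"
    and der: "\<And>z. z > 0 \<Longrightarrow> ((\<lambda>(s, t). th s t) has_derivative
               (\<lambda>h. ga (p1, z) * fst h + gb (p1, z) * snd h)) (at (p1, z))"
  shows "\<exists>L :: ereal.
             ((\<lambda>z. ereal (deriv (\<lambda>t. th p1 t) z)) \<longlongrightarrow> L) (at_right 0)
             \<and> (\<forall>q. (0, q) \<in> superdiff (theta_ext th) (p1, 0) \<longleftrightarrow> ereal q \<ge> L)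
             \<and> (L = \<infinity> \<longrightarrow> superdiff (theta_ext th) (p1, 0) = {})"
proof -
  define L where "L = (SUP z\<in>{0<..}. ereal (th p1 z / z))"
  have dv: "deriv (\<lambda>t. th p1 t) z = gb (p1, z)" if "z > 0" for z
    using partials(2)[OF der[OF that]] by (rule DERIV_imp_deriv)
  have tang: "th p1 y \<le> th p1 z + deriv (\<lambda>t. th p1 t) z * (y - z)" if "z > 0" "y \<ge> 0" for z y
  proof -
    have "(\<lambda>(s, t). th s t) (p1, y) \<le> (\<lambda>(s, t). th s t) (p1, z)
            + (ga (p1, z) * fst ((p1, y) - (p1, z)) + gb (p1, z) * snd ((p1, y) - (p1, z)))"
      using concave_grad_ineq[OF conc _ _ der[OF that(1)], where y="(p1, y)"] that p
      by (simp add: quadrant_def)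
    thus ?thesis using dv[OF that(1)] by simp
  qed
  have "continuous_on {0..} (\<lambda>t. (\<lambda>(s, t). th s t) (p1, t))"
    by (rule continuous_on_compose2[OF cont]) (auto intro!: continuous_intros simp: quadrant_def p less_imp_le)
  hence "continuous_on {0..} (\<lambda>t. th p1 t)" by simp
  hence "((\<lambda>t. th p1 t) \<longlongrightarrow> th p1 0) (at 0 within {0..})"
    by (simp add: continuous_on_def)
  hence c1: "((\<lambda>t. th p1 t) \<longlongrightarrow> 0) (at 0 within {0..})"
    using zero2 p by simp
  have "at_right (0::real) \<le> at 0 within {0..}" by (rule at_le) auto
  hence c0: "((\<lambda>t. th p1 t) \<longlongrightarrow> 0) (at_right 0)"
    using c1 by (rule tendsto_mono)
  have lim: "((\<lambda>z. ereal (deriv (\<lambda>t. th p1 t) z)) \<longlongrightarrow> L) (at_right 0)"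
    unfolding L_def
    using deriv_lim[of "\<lambda>t. th p1 t" "\<lambda>z. deriv (\<lambda>t. th p1 t) z"] tang c0 zero2 p by simp
  have sd: "(0, q) \<in> superdiff (theta_ext th) (p1, 0) \<longleftrightarrow> ereal q \<ge> L" for q
    using part3_sd[OF nonneg homog zero1 zero2 p, of q] unfolding L_def SUP_le_iff by auto
  have emp: "superdiff (theta_ext th) (p1, 0) = {}" if "L = \<infinity>"
  proof (rule ccontr)
    assume "superdiff (theta_ext th) (p1, 0) \<noteq> {}"
    then obtain r1 r2 where r: "(r1, r2) \<in> superdiff (theta_ext th) (p1, 0)" by auto
    hence R: "\<forall>s t. s \<ge> 0 \<longrightarrow> t \<ge> 0 \<longrightarrow> th s t \<le> th p1 0 + r1 * (s - p1) + r2 * (t - 0)"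
      using superdiff_iff[of p1 0 r1 r2 th] p by simp
    have "0 \<le> r1 * p1" using R[rule_format, of "p1 + p1" 0] zero2 p by simp
    moreover have "0 \<le> r1 * (0 - p1)" using R[rule_format, of 0 0] zero2 p by simp
    ultimately have "r1 = 0" using p by (auto simp: mult_le_0_iff zero_le_mult_iff)
    hence "ereal r2 \<ge> L" using r sd by simp
    thus False using that by simp
  qed
  show ?thesis using lim sd emp by blast
qed



lemma part3m_cone:
  fixes th :: "real \<Rightarrow> real \<Rightarrow> real"
  assumes nonneg: "\<And>s t. s \<ge> 0 \<Longrightarrow> t \<ge> 0 \<Longrightarrow> th s t \<ge> 0"
    and zero1: "\<And>s. s \<ge> 0 \<Longrightarrow> th 0 s = 0"
    and p: "p2 > 0"
  shows "normal_cone (Kset th) (0, p2, 0) =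
          {(q1, 0, q3) | q1 q3. q1 \<le> 0 \<and> q3 \<le> 0}
          \<union> {(q1, 0, q3) | q1 q3. q1 \<le> 0 \<and> q3 > 0 \<and>
                 (- q1 / q3, 0) \<in> superdiff (theta_ext th) (0, p2)}"
proof (intro set_eqI iffI)
  fix z assume z: "z \<in> normal_cone (Kset th) (0, p2, 0)"
  obtain z1 z2 z3 where zz: "z = (z1, z2, z3)" by (cases z) auto
  have P: "\<And>s t u. 0 \<le> s \<Longrightarrow> 0 \<le> t \<Longrightarrow> 0 \<le> u \<Longrightarrow> u \<le> th s t \<Longrightarrow>
     z1 * (s - 0) + z2 * (t - p2) + z3 * (u - 0) \<le> 0"
    using z unfolding zz cone_iff by blast
  have "z2 * p2 \<le> 0" using P[of 0 "p2 + p2" 0] nonneg p by simp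
  moreover have "z2 * (0 - p2) \<le> 0" using P[of 0 0 0] nonneg p by simp
  ultimately have z2: "z2 = 0" using p by (auto simp: mult_le_0_iff zero_le_mult_iff)
  have z1: "z1 \<le> 0" using P[of 1 p2 0] nonneg p by simp
  show "z \<in> {(q1, 0, q3) | q1 q3. q1 \<le> 0 \<and> q3 \<le> 0}
          \<union> {(q1, 0, q3) | q1 q3. q1 \<le> 0 \<and> q3 > 0 \<and>
                 (- q1 / q3, 0) \<in> superdiff (theta_ext th) (0, p2)}"
  proof (cases "z3 \<le> 0")
    case True
    thus ?thesis using zz z1 z2 by simp
  next
    case False
    hence z3: "z3 > 0" by simp
    have "\<forall>s t. s \<ge> 0 \<longrightarrow> t \<ge> 0 \<longrightarrow> th s t \<le> th 0 p2 + (- z1 / z3) * (s - 0) + 0 * (t - p2)"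
    proof (intro allI impI)
      fix s t :: real assume st: "s \<ge> 0" "t \<ge> 0"
      have "z1 * s + z3 * th s t \<le> 0" using P[of s t "th s t"] st nonneg z2 by simp
      hence "z3 * th s t \<le> - z1 * s" by simp
      hence "th s t \<le> (- z1 * s) / z3" using z3 by (simp add: field_simps)
      thus "th s t \<le> th 0 p2 + (- z1 / z3) * (s - 0) + 0 * (t - p2)"
        using zero1 p by simp
    qed
    hence "(- z1 / z3, 0) \<in> superdiff (theta_ext th) (0, p2)"
      using superdiff_iff[of 0 p2 "- z1 / z3" 0 th] p by simp
    thus ?thesis using zz z1 z2 z3 by simp
  qed
next
  fix z :: "real \<times> real \<times> real"
  assume z: "z \<in> {(q1, 0, q3) | q1 q3. q1 \<le> 0 \<and> q3 \<le> 0}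
          \<union> {(q1, 0, q3) | q1 q3. q1 \<le> 0 \<and> q3 > 0 \<and>
                 (- q1 / q3, 0) \<in> superdiff (theta_ext th) (0, p2)}"
  then obtain q1 q3 where zz: "z = (q1, 0, q3)" and q1: "q1 \<le> 0" by blast
  show "z \<in> normal_cone (Kset th) (0, p2, 0)"
    unfolding zz cone_iff
  proof (intro allI impI)
    fix s t u :: real assume st: "0 \<le> s" "0 \<le> t" "0 \<le> u" "u \<le> th s t"
    have a: "q1 * s \<le> 0" using q1 st by (simp add: mult_nonpos_nonneg)
    show "q1 * (s - 0) + 0 * (t - p2) + q3 * (u - 0) \<le> 0"
    proof (cases "q3 \<le> 0")
      case True
      hence "q3 * u \<le> 0" using st by (simp add: mult_nonpos_nonneg)
      thus ?thesis using a by simp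
    next
      case False
      hence q3: "q3 > 0" by simp
      hence "(- q1 / q3, 0) \<in> superdiff (theta_ext th) (0, p2)" using z zz by auto
      hence "th s t \<le> th 0 p2 + (- q1 / q3) * (s - 0) + 0 * (t - p2)"
        using superdiff_iff[of 0 p2 "- q1 / q3" 0 th] p st by simp
      hence "th s t \<le> (- q1 * s) / q3" using zero1 p by simp
      hence "q3 * th s t \<le> - q1 * s" using q3 by (simp add: field_simps)
      moreover have "q3 * u \<le> q3 * th s t" using q3 st by simp
      ultimately show ?thesis by simp
    qed
  qed
qed

lemma part3m_sd:
  fixes th :: "real \<Rightarrow> real \<Rightarrow> real"
  assumes nonneg: "\<And>s t. s \<ge> 0 \<Longrightarrow> t \<ge> 0 \<Longrightarrow> th s t \<ge> 0"
    and homog: "\<And>c s t. c > 0 \<Longrightarrow> s \<ge> 0 \<Longrightarrow> t \<ge> 0 \<Longrightarrow> th (c * s) (c * t) = c * th s t"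
    and zero1: "\<And>s. s \<ge> 0 \<Longrightarrow> th 0 s = 0"
    and zero2: "\<And>s. s \<ge> 0 \<Longrightarrow> th s 0 = 0"
    and p: "p2 > 0"
  shows "(q, 0) \<in> superdiff (theta_ext th) (0, p2) \<longleftrightarrow> (\<forall>z>0. th z p2 / z \<le> q)"
proof -
  have "(q, 0) \<in> superdiff (theta_ext th) (0, p2) \<longleftrightarrow> (\<forall>s t. s \<ge> 0 \<longrightarrow> t \<ge> 0 \<longrightarrow> th s t \<le> q * s)"
    using superdiff_iff[of 0 p2 q 0 th] p zero1 by simp
  also have "\<dots> \<longleftrightarrow> (\<forall>z>0. th z p2 / z \<le> q)"
  proof
    assume h: "\<forall>s t. s \<ge> 0 \<longrightarrow> t \<ge> 0 \<longrightarrow> th s t \<le> q * s"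
    show "\<forall>z>0. th z p2 / z \<le> q"
    proof (intro allI impI)
      fix z :: real assume "z > 0"
      thus "th z p2 / z \<le> q" using h p by (simp add: pos_divide_le_eq)
    qed
  next
    assume h: "\<forall>z>0. th z p2 / z \<le> q"
    have q0: "q \<ge> 0" using h[rule_format, of 1] nonneg[of 1 p2] p by simp
    show "\<forall>s t. s \<ge> 0 \<longrightarrow> t \<ge> 0 \<longrightarrow> th s t \<le> q * s"
    proof (intro allI impI)
      fix s t :: real assume st: "s \<ge> 0" "t \<ge> 0"
      show "th s t \<le> q * s"
      proof (cases "s = 0 \<or> t = 0")
        case True
        thus ?thesis using zero1 zero2 st q0 by auto
      next
        case False
        hence st': "s > 0" "t > 0" using st by auto
        define z where "z = p2 * s / t"
        have z: "z > 0" using st' p by (simp add: z_def)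
        have "th s t = th ((t / p2) * z) ((t / p2) * p2)" using st' p by (simp add: z_def)
        also have "\<dots> = (t / p2) * th z p2" using homog[of "t / p2" z p2] st' p z by simp
        also have "\<dots> \<le> (t / p2) * (q * z)"
          using h[rule_format, OF z] z st' p by (intro mult_left_mono) (auto simp: pos_divide_le_eq)
        also have "\<dots> = q * s" using st' p by (simp add: z_def field_simps)
        finally show ?thesis .
      qed
    qed
  qed
  finally show ?thesis .
qed

lemma part3m_lim:
  fixes th :: "real \<Rightarrow> real \<Rightarrow> real"
  assumes cont: "continuous_on quadrant (\<lambda>(s, t). th s t)"
    and conc: "concave_on quadrant (\<lambda>(s, t). th s t)"
    and nonneg: "\<And>s t. s \<ge> 0 \<Longrightarrow> t \<ge> 0 \<Longrightarrow> th s t \<ge> 0"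
    and homog: "\<And>c s t. c > 0 \<Longrightarrow> s \<ge> 0 \<Longrightarrow> t \<ge> 0 \<Longrightarrow> th (c * s) (c * t) = c * th s t"
    and zero1: "\<And>s. s \<ge> 0 \<Longrightarrow> th 0 s = 0"
    and zero2: "\<And>s. s \<ge> 0 \<Longrightarrow> th s 0 = 0"
    and p: "p2 > 0"
    and der: "\<And>z. z > 0 \<Longrightarrow> ((\<lambda>(s, t). th s t) has_derivative
               (\<lambda>h. ga (z, p2) * fst h + gb (z, p2) * snd h)) (at (z, p2))"
  shows "\<exists>L :: ereal.
             ((\<lambda>z. ereal (deriv (\<lambda>s. th s p2) z)) \<longlongrightarrow> L) (at_right 0)
             \<and> (\<forall>q. (q, 0) \<in> superdiff (theta_ext th) (0, p2) \<longleftrightarrow> ereal q \<ge> L)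
             \<and> (L = \<infinity> \<longrightarrow> superdiff (theta_ext th) (0, p2) = {})"
proof -
  define L where "L = (SUP z\<in>{0<..}. ereal (th z p2 / z))"
  have dv: "deriv (\<lambda>s. th s p2) z = ga (z, p2)" if "z > 0" for z
    using partials(1)[OF der[OF that]] by (rule DERIV_imp_deriv)
  have tang: "th y p2 \<le> th z p2 + deriv (\<lambda>s. th s p2) z * (y - z)" if "z > 0" "y \<ge> 0" for z y
  proof -
    have "(\<lambda>(s, t). th s t) (y, p2) \<le> (\<lambda>(s, t). th s t) (z, p2)
            + (ga (z, p2) * fst ((y, p2) - (z, p2)) + gb (z, p2) * snd ((y, p2) - (z, p2)))"
      using concave_grad_ineq[OF conc _ _ der[OF that(1)], where y="(y, p2)"] that p
      by (simp add: quadrant_def)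
    thus ?thesis using dv[OF that(1)] by simp
  qed
  have "continuous_on {0..} (\<lambda>s. (\<lambda>(s, t). th s t) (s, p2))"
    by (rule continuous_on_compose2[OF cont]) (auto intro!: continuous_intros simp: quadrant_def p less_imp_le)
  hence "continuous_on {0..} (\<lambda>s. th s p2)" by simp
  hence "((\<lambda>s. th s p2) \<longlongrightarrow> th 0 p2) (at 0 within {0..})"
    by (simp add: continuous_on_def)
  hence c1: "((\<lambda>s. th s p2) \<longlongrightarrow> 0) (at 0 within {0..})"
    using zero1 p by simp
  have "at_right (0::real) \<le> at 0 within {0..}" by (rule at_le) auto
  hence c0: "((\<lambda>s. th s p2) \<longlongrightarrow> 0) (at_right 0)"
    using c1 by (rule tendsto_mono)
  have lim: "((\<lambda>z. ereal (deriv (\<lambda>s. th s p2) z)) \<longlongrightarrow> L) (at_right 0)"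
    unfolding L_def
    using deriv_lim[of "\<lambda>s. th s p2" "\<lambda>z. deriv (\<lambda>s. th s p2) z"] tang c0 zero1 p by simp
  have sd: "(q, 0) \<in> superdiff (theta_ext th) (0, p2) \<longleftrightarrow> ereal q \<ge> L" for q
    using part3m_sd[OF nonneg homog zero1 zero2 p, of q] unfolding L_def SUP_le_iff by auto
  have emp: "superdiff (theta_ext th) (0, p2) = {}" if "L = \<infinity>"
  proof (rule ccontr)
    assume "superdiff (theta_ext th) (0, p2) \<noteq> {}"
    then obtain r1 r2 where r: "(r1, r2) \<in> superdiff (theta_ext th) (0, p2)" by auto
    hence R: "\<forall>s t. s \<ge> 0 \<longrightarrow> t \<ge> 0 \<longrightarrow> th s t \<le> th 0 p2 + r1 * (s - 0) + r2 * (t - p2)"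
      using superdiff_iff[of 0 p2 r1 r2 th] p by simp
    have "0 \<le> r2 * p2" using R[rule_format, of 0 "p2 + p2"] zero1 p by simp
    moreover have "0 \<le> r2 * (0 - p2)" using R[rule_format, of 0 0] zero1 p by simp
    ultimately have "r2 = 0" using p by (auto simp: mult_le_0_iff zero_le_mult_iff)
    hence "ereal r1 \<ge> L" using r sd by simp
    thus False using that by simp
  qed
  show ?thesis using lim sd emp by blast
qed



lemma part4:
  fixes th :: "real \<Rightarrow> real \<Rightarrow> real"
  assumes nonneg: "\<And>s t. s \<ge> 0 \<Longrightarrow> t \<ge> 0 \<Longrightarrow> th s t \<ge> 0"
    and zero1: "\<And>s. s \<ge> 0 \<Longrightarrow> th 0 s = 0"
  shows "normal_cone (Kset th) (0, 0, 0) =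
        {(q1, q2, q3) | q1 q2 q3. q1 \<le> 0 \<and> q2 \<le> 0 \<and> q3 \<le> 0}
        \<union> {(q1, q2, q3) | q1 q2 q3. q1 \<le> 0 \<and> q2 \<le> 0 \<and> q3 > 0 \<and>
               (q1 / q3, q2 / q3) \<in> uminus ` superdiff (theta_ext th) (0, 0)}"
proof -
  have um: "x \<in> uminus ` A \<longleftrightarrow> - x \<in> A" for x :: "real \<times> real" and A by force
  have sd: "(q1 / q3, q2 / q3) \<in> uminus ` superdiff (theta_ext th) (0, 0) \<longleftrightarrow>
      (\<forall>s t. s \<ge> 0 \<longrightarrow> t \<ge> 0 \<longrightarrow> th s t \<le> (- q1 / q3) * s + (- q2 / q3) * t)" for q1 q2 q3
    using superdiff_iff[of 0 0 "- q1 / q3" "- q2 / q3" th] zero1[of 0] unfolding um by simp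
  show ?thesis
  proof (intro set_eqI iffI)
    fix z assume z: "z \<in> normal_cone (Kset th) (0, 0, 0)"
    obtain z1 z2 z3 where zz: "z = (z1, z2, z3)" by (cases z) auto
    have P: "\<And>s t u. 0 \<le> s \<Longrightarrow> 0 \<le> t \<Longrightarrow> 0 \<le> u \<Longrightarrow> u \<le> th s t \<Longrightarrow>
       z1 * (s - 0) + z2 * (t - 0) + z3 * (u - 0) \<le> 0"
      using z unfolding zz cone_iff by blast
    have z1: "z1 \<le> 0" using P[of 1 0 0] nonneg by simp
    have z2: "z2 \<le> 0" using P[of 0 1 0] nonneg by simp
    show "z \<in> {(q1, q2, q3) | q1 q2 q3. q1 \<le> 0 \<and> q2 \<le> 0 \<and> q3 \<le> 0}
        \<union> {(q1, q2, q3) | q1 q2 q3. q1 \<le> 0 \<and> q2 \<le> 0 \<and> q3 > 0 \<and>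
               (q1 / q3, q2 / q3) \<in> uminus ` superdiff (theta_ext th) (0, 0)}"
    proof (cases "z3 \<le> 0")
      case True
      thus ?thesis using zz z1 z2 by simp
    next
      case False
      hence z3: "z3 > 0" by simp
      have "\<forall>s t. s \<ge> 0 \<longrightarrow> t \<ge> 0 \<longrightarrow> th s t \<le> (- z1 / z3) * s + (- z2 / z3) * t"
      proof (intro allI impI)
        fix s t :: real assume st: "s \<ge> 0" "t \<ge> 0"
        have "z1 * s + z2 * t + z3 * th s t \<le> 0" using P[of s t "th s t"] st nonneg by simp
        hence "z3 * th s t \<le> - z1 * s - z2 * t" by simp
        thus "th s t \<le> (- z1 / z3) * s + (- z2 / z3) * t" using z3 by (simp add: field_simps)
      qed
      hence "(z1 / z3, z2 / z3) \<in> uminus ` superdiff (theta_ext th) (0, 0)" using sd by blast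
      thus ?thesis using zz z1 z2 z3 by simp
    qed
  next
    fix z :: "real \<times> real \<times> real"
    assume z: "z \<in> {(q1, q2, q3) | q1 q2 q3. q1 \<le> 0 \<and> q2 \<le> 0 \<and> q3 \<le> 0}
        \<union> {(q1, q2, q3) | q1 q2 q3. q1 \<le> 0 \<and> q2 \<le> 0 \<and> q3 > 0 \<and>
               (q1 / q3, q2 / q3) \<in> uminus ` superdiff (theta_ext th) (0, 0)}"
    then obtain q1 q2 q3 where zz: "z = (q1, q2, q3)" and q1: "q1 \<le> 0" and q2: "q2 \<le> 0" by blast
    show "z \<in> normal_cone (Kset th) (0, 0, 0)"
      unfolding zz cone_iff
    proof (intro allI impI)
      fix s t u :: real assume st: "0 \<le> s" "0 \<le> t" "0 \<le> u" "u \<le> th s t"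
      have a: "q1 * s \<le> 0" "q2 * t \<le> 0" using q1 q2 st by (simp_all add: mult_nonpos_nonneg)
      show "q1 * (s - 0) + q2 * (t - 0) + q3 * (u - 0) \<le> 0"
      proof (cases "q3 \<le> 0")
        case True
        hence "q3 * u \<le> 0" using st by (simp add: mult_nonpos_nonneg)
        thus ?thesis using a by simp
      next
        case False
        hence q3: "q3 > 0" by simp
        hence "(q1 / q3, q2 / q3) \<in> uminus ` superdiff (theta_ext th) (0, 0)" using z zz by auto
        hence "th s t \<le> (- q1 / q3) * s + (- q2 / q3) * t" using sd st by blast
        hence "q3 * th s t \<le> - q1 * s - q2 * t" using q3 by (simp add: field_simps)
        moreover have "q3 * u \<le> q3 * th s t" using q3 st by simp
        ultimately show ?thesis by simp
      qed
    qed
  qed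
qed

lemma part5:
  fixes th :: "real \<Rightarrow> real \<Rightarrow> real"
  assumes conc: "concave_on quadrant (\<lambda>(s, t). th s t)"
    and pos: "\<And>s t. s > 0 \<Longrightarrow> t > 0 \<Longrightarrow> th s t > 0"
    and p: "p1 > 0" "p2 > 0"
    and der: "((\<lambda>(s, t). th s t) has_derivative (\<lambda>h. a * fst h + b * snd h)) (at (p1, p2))"
  shows "normal_cone (Kset th) (p1, p2, th p1 p2) =
          {(l * - deriv (\<lambda>s. th s p2) p1, l * - deriv (\<lambda>t. th p1 t) p2, l) | l. l \<ge> 0}"
proof -
  have Da: "((\<lambda>s. th s p2) has_real_derivative a) (at p1)" using partials(1)[OF der] .
  have Db: "((\<lambda>t. th p1 t) has_real_derivative b) (at p2)" using partials(2)[OF der] .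
  have da: "deriv (\<lambda>s. th s p2) p1 = a" using Da by (rule DERIV_imp_deriv)
  have db: "deriv (\<lambda>t. th p1 t) p2 = b" using Db by (rule DERIV_imp_deriv)
  have grad: "th s t \<le> th p1 p2 + a * (s - p1) + b * (t - p2)" if "s \<ge> 0" "t \<ge> 0" for s t
    using concave_grad_ineq[OF conc _ _ der, where y="(s, t)"] that p
    by (simp add: quadrant_def algebra_simps)
  show ?thesis unfolding da db
  proof (intro set_eqI iffI)
    fix z assume z: "z \<in> normal_cone (Kset th) (p1, p2, th p1 p2)"
    obtain z1 z2 z3 where zz: "z = (z1, z2, z3)" by (cases z) auto
    have P: "\<And>s t u. 0 \<le> s \<Longrightarrow> 0 \<le> t \<Longrightarrow> 0 \<le> u \<Longrightarrow> u \<le> th s t \<Longrightarrow>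
       z1 * (s - p1) + z2 * (t - p2) + z3 * (u - th p1 p2) \<le> 0"
      using z unfolding zz cone_iff by blast
    have "z3 * (0 - th p1 p2) \<le> 0" using P[of p1 p2 0] p pos[OF p] by simp
    hence z3: "z3 \<ge> 0" using pos[OF p] by (simp add: zero_le_mult_iff)
    define h1 where "h1 = (\<lambda>s. z1 * (s - p1) + z3 * (th s p2 - th p1 p2))"
    have "(h1 has_real_derivative (z1 * 1 + z3 * a)) (at p1)"
      unfolding h1_def by (auto intro!: derivative_eq_intros Da)
    moreover have "\<forall>y. \<bar>p1 - y\<bar> < p1 \<longrightarrow> h1 y \<le> h1 p1"
    proof (intro allI impI)
      fix y assume "\<bar>p1 - y\<bar> < p1"
      hence y: "y > 0" by linarith
      have "th y p2 \<ge> 0" using pos[of y p2] y p by simp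
      thus "h1 y \<le> h1 p1" using P[of y p2 "th y p2"] y p by (simp add: h1_def)
    qed
    ultimately have e1: "z1 * 1 + z3 * a = 0" using p by (intro DERIV_local_max) auto
    define h2 where "h2 = (\<lambda>t. z2 * (t - p2) + z3 * (th p1 t - th p1 p2))"
    have "(h2 has_real_derivative (z2 * 1 + z3 * b)) (at p2)"
      unfolding h2_def by (auto intro!: derivative_eq_intros Db)
    moreover have "\<forall>y. \<bar>p2 - y\<bar> < p2 \<longrightarrow> h2 y \<le> h2 p2"
    proof (intro allI impI)
      fix y assume "\<bar>p2 - y\<bar> < p2"
      hence y: "y > 0" by linarith
      have "th p1 y \<ge> 0" using pos[of p1 y] y p by simp
      thus "h2 y \<le> h2 p2" using P[of p1 y "th p1 y"] y p by (simp add: h2_def)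
    qed
    ultimately have e2: "z2 * 1 + z3 * b = 0" using p by (intro DERIV_local_max) auto
    have "z = (z3 * - a, z3 * - b, z3)" using zz e1 e2 by simp
    thus "z \<in> {(l * - a, l * - b, l) | l. l \<ge> 0}" using z3 by blast
  next
    fix z :: "real \<times> real \<times> real"
    assume "z \<in> {(l * - a, l * - b, l) | l. l \<ge> 0}"
    then obtain l where zz: "z = (l * - a, l * - b, l)" and l: "l \<ge> 0" by blast
    show "z \<in> normal_cone (Kset th) (p1, p2, th p1 p2)"
      unfolding zz cone_iff
    proof (intro allI impI)
      fix s t u :: real assume st: "0 \<le> s" "0 \<le> t" "0 \<le> u" "u \<le> th s t"
      have "u - th p1 p2 - a * (s - p1) - b * (t - p2) \<le> 0" using grad[of s t] st by simp
      hence "l * (u - th p1 p2 - a * (s - p1) - b * (t - p2)) \<le> 0"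
        using l by (simp add: mult_nonneg_nonpos)
      thus "l * - a * (s - p1) + l * - b * (t - p2) + l * (u - th p1 p2) \<le> 0"
        by (simp add: algebra_simps)
    qed
  qed
qed

theorem lemma4p4:
  fixes th :: "real \<Rightarrow> real \<Rightarrow> real"
  assumes cont: "continuous_on quadrant (\<lambda>(s, t). th s t)"
    and conc: "concave_on quadrant (\<lambda>(s, t). th s t)"
    and nonneg: "\<And>s t. s \<ge> 0 \<Longrightarrow> t \<ge> 0 \<Longrightarrow> th s t \<ge> 0"
    and homog: "\<And>c s t. c > 0 \<Longrightarrow> s \<ge> 0 \<Longrightarrow> t \<ge> 0 \<Longrightarrow> th (c * s) (c * t) = c * th s t"
    and symm: "\<And>s t. s \<ge> 0 \<Longrightarrow> t \<ge> 0 \<Longrightarrow> th s t = th t s"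
    and smooth: "smooth_on2 (\<lambda>(s, t). th s t) open_quadrant"
    and zero1: "\<And>s. s \<ge> 0 \<Longrightarrow> th 0 s = 0"
    and zero2: "\<And>s. s \<ge> 0 \<Longrightarrow> th s 0 = 0"
    and diag: "\<And>s. s \<ge> 0 \<Longrightarrow> th s s = s"
    and pos: "\<And>s t. s > 0 \<Longrightarrow> t > 0 \<Longrightarrow> th s t > 0"
    and mono1: "\<And>s s' t. 0 \<le> s \<Longrightarrow> s \<le> s' \<Longrightarrow> t \<ge> 0 \<Longrightarrow> th s t \<le> th s' t"
    and mono2: "\<And>s t t'. s \<ge> 0 \<Longrightarrow> 0 \<le> t \<Longrightarrow> t \<le> t' \<Longrightarrow> th s t \<le> th s t'"
  shows
    "(\<forall>p1 p2 p3. p1 \<ge> 0 \<and> p2 \<ge> 0 \<and> 0 < p3 \<and> p3 < th p1 p2 \<longrightarrow>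
        normal_cone (Kset th) (p1, p2, p3) = {0})
   \<and> (\<forall>p1 p2. p1 > 0 \<and> p2 > 0 \<longrightarrow>
        normal_cone (Kset th) (p1, p2, 0) = {(0, 0, q3) | q3. q3 \<le> 0})
   \<and> (\<forall>p1. p1 > 0 \<longrightarrow>
        normal_cone (Kset th) (p1, 0, 0) =
          {(0, q2, q3) | q2 q3. q2 \<le> 0 \<and> q3 \<le> 0}
          \<union> {(0, q2, q3) | q2 q3. q2 \<le> 0 \<and> q3 > 0 \<and>
                 (0, - q2 / q3) \<in> superdiff (theta_ext th) (p1, 0)}
        \<and> (\<exists>L :: ereal.
             ((\<lambda>z. ereal (deriv (\<lambda>t. th p1 t) z)) \<longlongrightarrow> L) (at_right 0)
             \<and> (\<forall>q. (0, q) \<in> superdiff (theta_ext th) (p1, 0) \<longleftrightarrow> ereal q \<ge> L)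
             \<and> (L = \<infinity> \<longrightarrow> superdiff (theta_ext th) (p1, 0) = {})))
   \<and> (\<forall>p2. p2 > 0 \<longrightarrow>
        normal_cone (Kset th) (0, p2, 0) =
          {(q1, 0, q3) | q1 q3. q1 \<le> 0 \<and> q3 \<le> 0}
          \<union> {(q1, 0, q3) | q1 q3. q1 \<le> 0 \<and> q3 > 0 \<and>
                 (- q1 / q3, 0) \<in> superdiff (theta_ext th) (0, p2)}
        \<and> (\<exists>L :: ereal.
             ((\<lambda>z. ereal (deriv (\<lambda>s. th s p2) z)) \<longlongrightarrow> L) (at_right 0)
             \<and> (\<forall>q. (q, 0) \<in> superdiff (theta_ext th) (0, p2) \<longleftrightarrow> ereal q \<ge> L)
             \<and> (L = \<infinity> \<longrightarrow> superdiff (theta_ext th) (0, p2) = {})))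
   \<and> normal_cone (Kset th) (0, 0, 0) =
        {(q1, q2, q3) | q1 q2 q3. q1 \<le> 0 \<and> q2 \<le> 0 \<and> q3 \<le> 0}
        \<union> {(q1, q2, q3) | q1 q2 q3. q1 \<le> 0 \<and> q2 \<le> 0 \<and> q3 > 0 \<and>
               (q1 / q3, q2 / q3) \<in> uminus ` superdiff (theta_ext th) (0, 0)}
   \<and> (\<forall>p1 p2. p1 > 0 \<and> p2 > 0 \<longrightarrow>
        normal_cone (Kset th) (p1, p2, th p1 p2) =
          {(l * - deriv (\<lambda>s. th s p2) p1, l * - deriv (\<lambda>t. th p1 t) p2, l) | l. l \<ge> 0})"
proof -
  have "Ck_on (Suc 0) (\<lambda>(s, t). th s t) open_quadrant" using smooth unfolding smooth_on2_def by blast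
  then obtain g1 g2 where der: "\<And>x. x \<in> open_quadrant \<Longrightarrow>
      ((\<lambda>(s, t). th s t) has_derivative (\<lambda>h. g1 x * fst h + g2 x * snd h)) (at x)"
    by auto
  have A1: "\<forall>p1 p2 p3. p1 \<ge> 0 \<and> p2 \<ge> 0 \<and> 0 < p3 \<and> p3 < th p1 p2 \<longrightarrow>
        normal_cone (Kset th) (p1, p2, p3) = {0}"
  proof (intro allI impI)
    fix p1 p2 p3 :: real assume h: "p1 \<ge> 0 \<and> p2 \<ge> 0 \<and> 0 < p3 \<and> p3 < th p1 p2"
    show "normal_cone (Kset th) (p1, p2, p3) = {0}"
      using h by (intro part1[where th=th, OF homog zero1 zero2 mono1 mono2]) auto
  qed
  have A2: "\<forall>p1 p2. p1 > 0 \<and> p2 > 0 \<longrightarrow>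
        normal_cone (Kset th) (p1, p2, 0) = {(0, 0, q3) | q3. q3 \<le> 0}"
  proof (intro allI impI)
    fix p1 p2 :: real assume h: "p1 > 0 \<and> p2 > 0"
    show "normal_cone (Kset th) (p1, p2, 0) = {(0, 0, q3) | q3. q3 \<le> 0}"
      using h by (intro part2[where th=th, OF nonneg pos]) auto
  qed
  have A3: "\<forall>p1. p1 > 0 \<longrightarrow>
        normal_cone (Kset th) (p1, 0, 0) =
          {(0, q2, q3) | q2 q3. q2 \<le> 0 \<and> q3 \<le> 0}
          \<union> {(0, q2, q3) | q2 q3. q2 \<le> 0 \<and> q3 > 0 \<and>
                 (0, - q2 / q3) \<in> superdiff (theta_ext th) (p1, 0)}
        \<and> (\<exists>L :: ereal.
             ((\<lambda>z. ereal (deriv (\<lambda>t. th p1 t) z)) \<longlongrightarrow> L) (at_right 0)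
             \<and> (\<forall>q. (0, q) \<in> superdiff (theta_ext th) (p1, 0) \<longleftrightarrow> ereal q \<ge> L)
             \<and> (L = \<infinity> \<longrightarrow> superdiff (theta_ext th) (p1, 0) = {}))"
  proof (intro allI impI conjI)
    fix p1 :: real assume p: "p1 > 0"
    show "normal_cone (Kset th) (p1, 0, 0) =
          {(0, q2, q3) | q2 q3. q2 \<le> 0 \<and> q3 \<le> 0}
          \<union> {(0, q2, q3) | q2 q3. q2 \<le> 0 \<and> q3 > 0 \<and>
                 (0, - q2 / q3) \<in> superdiff (theta_ext th) (p1, 0)}"
      by (rule part3_cone[where th=th, OF nonneg zero2 p])
    show "\<exists>L :: ereal.
             ((\<lambda>z. ereal (deriv (\<lambda>t. th p1 t) z)) \<longlongrightarrow> L) (at_right 0)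
             \<and> (\<forall>q. (0, q) \<in> superdiff (theta_ext th) (p1, 0) \<longleftrightarrow> ereal q \<ge> L)
             \<and> (L = \<infinity> \<longrightarrow> superdiff (theta_ext th) (p1, 0) = {})"
      apply (rule part3_lim[where th=th and ga=g1 and gb=g2])
      using cont conc nonneg homog zero1 zero2 p by (auto intro!: der simp: open_quadrant_def)
  qed
  have A4: "\<forall>p2. p2 > 0 \<longrightarrow>
        normal_cone (Kset th) (0, p2, 0) =
          {(q1, 0, q3) | q1 q3. q1 \<le> 0 \<and> q3 \<le> 0}
          \<union> {(q1, 0, q3) | q1 q3. q1 \<le> 0 \<and> q3 > 0 \<and>
                 (- q1 / q3, 0) \<in> superdiff (theta_ext th) (0, p2)}
        \<and> (\<exists>L :: ereal.
             ((\<lambda>z. ereal (deriv (\<lambda>s. th s p2) z)) \<longlongrightarrow> L) (at_right 0)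
             \<and> (\<forall>q. (q, 0) \<in> superdiff (theta_ext th) (0, p2) \<longleftrightarrow> ereal q \<ge> L)
             \<and> (L = \<infinity> \<longrightarrow> superdiff (theta_ext th) (0, p2) = {}))"
  proof (intro allI impI conjI)
    fix p2 :: real assume p: "p2 > 0"
    show "normal_cone (Kset th) (0, p2, 0) =
          {(q1, 0, q3) | q1 q3. q1 \<le> 0 \<and> q3 \<le> 0}
          \<union> {(q1, 0, q3) | q1 q3. q1 \<le> 0 \<and> q3 > 0 \<and>
                 (- q1 / q3, 0) \<in> superdiff (theta_ext th) (0, p2)}"
      by (rule part3m_cone[where th=th, OF nonneg zero1 p])
    show "\<exists>L :: ereal.
             ((\<lambda>z. ereal (deriv (\<lambda>s. th s p2) z)) \<longlongrightarrow> L) (at_right 0)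
             \<and> (\<forall>q. (q, 0) \<in> superdiff (theta_ext th) (0, p2) \<longleftrightarrow> ereal q \<ge> L)
             \<and> (L = \<infinity> \<longrightarrow> superdiff (theta_ext th) (0, p2) = {})"
      apply (rule part3m_lim[where th=th and ga=g1 and gb=g2])
      using cont conc nonneg homog zero1 zero2 p by (auto intro!: der simp: open_quadrant_def)
  qed
  have A5: "normal_cone (Kset th) (0, 0, 0) =
        {(q1, q2, q3) | q1 q2 q3. q1 \<le> 0 \<and> q2 \<le> 0 \<and> q3 \<le> 0}
        \<union> {(q1, q2, q3) | q1 q2 q3. q1 \<le> 0 \<and> q2 \<le> 0 \<and> q3 > 0 \<and>
               (q1 / q3, q2 / q3) \<in> uminus ` superdiff (theta_ext th) (0, 0)}"
    by (rule part4[where th=th, OF nonneg zero1])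
  have A6: "\<forall>p1 p2. p1 > 0 \<and> p2 > 0 \<longrightarrow>
        normal_cone (Kset th) (p1, p2, th p1 p2) =
          {(l * - deriv (\<lambda>s. th s p2) p1, l * - deriv (\<lambda>t. th p1 t) p2, l) | l. l \<ge> 0}"
  proof (intro allI impI)
    fix p1 p2 :: real assume p: "p1 > 0 \<and> p2 > 0"
    have "(p1, p2) \<in> open_quadrant" using p by (simp add: open_quadrant_def)
    from part5[where th=th, OF conc pos _ _ der[OF this]] p
    show "normal_cone (Kset th) (p1, p2, th p1 p2) =
          {(l * - deriv (\<lambda>s. th s p2) p1, l * - deriv (\<lambda>t. th p1 t) p2, l) | l. l \<ge> 0}"
      by simp
  qed
  show ?thesis
    by (rule conjI[OF A1 conjI[OF A2 conjI[OF A3 conjI[OF A4 conjI[OF A5 A6]]]]])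
qed


end
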